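(* Let $\Bbbk$ be a field with $\mathrm{char}(\Bbbk)\neq2$, $n\ge2$, $\mathbb{H}_{2^n}$ the Nichols Hopf algebra and $A$ a unital associative $\Bbbk$-algebra. Every partial action $\cdot$ of $\mathbb{H}_{2^n}$ on $A$ such that either $g\cdot1_A=1_A$, or $g\cdot 1_A=0$ and $x_i\cdot 1_A\in Z(A)$ for all $i\in\{1,\dots,n-1\}$, is symmetric, i.e. satisfies $h\cdot(k\cdot a)=(h_1k\cdot a)(h_2\cdot1_A)$ for all $h,k\in\mathbb{H}_{2^n}$, $a\in A$.
   Context: $\mathbb{H}_{2^n}$ is the Hopf algebra generated by $g,x_1,\dots,x_{n-1}$ with relations $g^2=1$, $x_i^2=0$, $x_ig=-gx_i$, $x_ix_j=-x_jx_i$; it has basis $\{g^{j_0}x_1^{j_1}\cdots x_{n-1}^{j_{n-1}}:j_i\in\{0,1\}\}$, with $\Delta(g)=g\otimes g$, $\varepsilon(g)=1$, $\Delta(x_i)=x_i\otimes1+g\otimes x_i$, $\varepsilon(x_i)=0$, $S(g)=g$, $S(x_i)=-gx_i$. $Z(A)$ is the center of $A$. For a bialgebra $H$ with $\Delta(h)=h_1\otimes h_2$, a partial action of $H$ on $A$ is a linear map $\cdot:H\otimes A\to A$ with $1_H\cdot a=a$, $h\cdot(ab)=(h_1\cdot a)(h_2\cdot b)$ and $h\cdot(k\cdot a)=(h_1\cdot1_A)(h_2k\cdot a)$ for all $h,k\in H$, $a,b\in A$. *)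

theory Defs
  imports Complex_Main
begin

text \<open>Basis of the Nichols Hopf algebra H_{2^n}: the pair (b, S) with S \<subseteq> {1..<n}
  stands for g^b x_{s_1} x_{s_2} ... x_{s_k}, where s_1 < ... < s_k enumerate S.
  Elements of H_{2^n} are coefficient functions on the basis (zero off the basis).\<close>

type_synonym hb = "bool \<times> nat set"

definition hbasis :: "nat \<Rightarrow> hb set" where
  "hbasis n = UNIV \<times> Pow {1..<n}"

definition Hn :: "nat \<Rightarrow> (hb \<Rightarrow> 'k::field) set" where
  "Hn n = {f. \<forall>p. p \<notin> hbasis n \<longrightarrow> f p = 0}"

definition hbas :: "hb \<Rightarrow> hb \<Rightarrow> 'k::field" where
  "hbas p = (\<lambda>q. if q = p then 1 else 0)"

definition inv_count :: "nat set \<Rightarrow> nat set \<Rightarrow> nat" where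
  "inv_count S T = card {(s, t). s \<in> S \<and> t \<in> T \<and> t < s}"

text \<open>Structure constants of the multiplication:
  (g^a X_S)(g^b X_T) = (-1)^(b|S|) g^(a+b) X_S X_T, and for disjoint S, T,
  X_S X_T = (-1)^(#{(s,t) in S x T. t < s}) X_(S \<union> T); X_S X_T = 0 otherwise.\<close>
definition bmul_coeff :: "hb \<Rightarrow> hb \<Rightarrow> hb \<Rightarrow> 'k::field" where
  "bmul_coeff p q r = (case p of (a, S) \<Rightarrow> case q of (b, T) \<Rightarrow>
     if S \<inter> T = {} \<and> r = (a \<noteq> b, S \<union> T)
     then (-1) ^ ((if b then card S else 0) + inv_count S T) else 0)"

definition hmul :: "nat \<Rightarrow> (hb \<Rightarrow> 'k::field) \<Rightarrow> (hb \<Rightarrow> 'k) \<Rightarrow> hb \<Rightarrow> 'k" where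
  "hmul n f h = (\<lambda>r. \<Sum>p\<in>hbasis n. \<Sum>q\<in>hbasis n. f p * h q * bmul_coeff p q r)"

text \<open>Structure constants of the comultiplication, obtained by expanding
  Delta(g^a x_{s_1}...x_{s_k}) = (g\<otimes>g)^a (x_{s_1}\<otimes>1 + g\<otimes>x_{s_1}) ... (x_{s_k}\<otimes>1 + g\<otimes>x_{s_k}):
  Delta(g^a X_S) = sum over T \<subseteq> S of (-1)^(#{(j,i). j \<in> S-T, i \<in> T, j < i})
     g^(a+|T|) X_(S-T) \<otimes> g^a X_T.
  delta_coeff p q r is the coefficient of q \<otimes> r in Delta(p).\<close>
definition delta_coeff :: "hb \<Rightarrow> hb \<Rightarrow> hb \<Rightarrow> 'k::field" where
  "delta_coeff p q r = (case p of (a, S) \<Rightarrow>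
     \<Sum>T\<in>Pow S. if q = (a \<noteq> odd (card T), S - T) \<and> r = (a, T)
                 then (-1) ^ card {(j, i). j \<in> S - T \<and> i \<in> T \<and> j < i} else 0)"

definition hdelta :: "nat \<Rightarrow> (hb \<Rightarrow> 'k::field) \<Rightarrow> hb \<Rightarrow> hb \<Rightarrow> 'k" where
  "hdelta n f q r = (\<Sum>p\<in>hbasis n. f p * delta_coeff p q r)"

definition k_algebra :: "('k::field \<Rightarrow> 'a::ring_1 \<Rightarrow> 'a) \<Rightarrow> bool" where
  "k_algebra scale \<longleftrightarrow> module scale \<and>
     (\<forall>c x y. scale c (x * y) = scale c x * y \<and> scale c (x * y) = x * scale c y)"

text \<open>The action, a linear map H \<otimes> A \<rightarrow> A, is given by its values act p a on basis
  elements p and extended linearly in the H-argument.\<close>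
definition hact :: "nat \<Rightarrow> ('k::field \<Rightarrow> 'a::ring_1 \<Rightarrow> 'a) \<Rightarrow> (hb \<Rightarrow> 'a \<Rightarrow> 'a)
    \<Rightarrow> (hb \<Rightarrow> 'k) \<Rightarrow> 'a \<Rightarrow> 'a" where
  "hact n scale act f a = (\<Sum>p\<in>hbasis n. scale (f p) (act p a))"

definition is_partial_action :: "nat \<Rightarrow> ('k::field \<Rightarrow> 'a::ring_1 \<Rightarrow> 'a) \<Rightarrow> (hb \<Rightarrow> 'a \<Rightarrow> 'a) \<Rightarrow> bool" where
  "is_partial_action n scale act \<longleftrightarrow>
     (\<forall>p\<in>hbasis n. \<forall>x y. act p (x + y) = act p x + act p y) \<and>
     (\<forall>p\<in>hbasis n. \<forall>c x. act p (scale c x) = scale c (act p x)) \<and>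
     (\<forall>a. hact n scale act (hbas (False, {})) a = a) \<and>
     (\<forall>h\<in>Hn n. \<forall>a b. hact n scale act h (a * b) =
        (\<Sum>q\<in>hbasis n. \<Sum>r\<in>hbasis n. scale (hdelta n h q r) (act q a * act r b))) \<and>
     (\<forall>h\<in>Hn n. \<forall>k\<in>Hn n. \<forall>a. hact n scale act h (hact n scale act k a) =
        (\<Sum>q\<in>hbasis n. \<Sum>r\<in>hbasis n.
           scale (hdelta n h q r) (act q 1 * hact n scale act (hmul n (hbas r) k) a)))"

definition is_symmetric :: "nat \<Rightarrow> ('k::field \<Rightarrow> 'a::ring_1 \<Rightarrow> 'a) \<Rightarrow> (hb \<Rightarrow> 'a \<Rightarrow> 'a) \<Rightarrow> bool" where
  "is_symmetric n scale act \<longleftrightarrow>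
     (\<forall>h\<in>Hn n. \<forall>k\<in>Hn n. \<forall>a. hact n scale act h (hact n scale act k a) =
        (\<Sum>q\<in>hbasis n. \<Sum>r\<in>hbasis n.
           scale (hdelta n h q r) (hact n scale act (hmul n (hbas q) k) a * act r 1)))"

end

theory Submission
  imports Defs
begin

definition dsg :: "nat set \<Rightarrow> nat set \<Rightarrow> 'k::field" where
  "dsg S T = (-1) ^ card {(j, i). j \<in> S - T \<and> i \<in> T \<and> j < i}"

lemma finite_hbasis[simp]: "finite (hbasis n)"
  by (simp add: hbasis_def)

lemma hbasis_iff[simp]: "((x::bool), S) \<in> hbasis n \<longleftrightarrow> S \<subseteq> {1..<n}"
  by (auto simp: hbasis_def)

lemma hbas_Hn: "p \<in> hbasis n \<Longrightarrow> hbas p \<in> Hn n"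
  unfolding Hn_def hbas_def by (simp del: hbasis_iff)

lemma hdelta_hbas: assumes "p \<in> hbasis n" shows "hdelta n (hbas p) q r = delta_coeff p q r"
proof -
  have "hdelta n (hbas p) q r = (\<Sum>x\<in>hbasis n. if x = p then delta_coeff p q r else 0)"
    unfolding hdelta_def by (rule sum.cong) (auto simp: hbas_def)
  also have "\<dots> = delta_coeff p q r" using assms by simp
  finally show ?thesis .
qed

lemma hmul_hbas: assumes q: "q \<in> hbasis n" shows "hmul n (hbas q) k = (\<lambda>r. \<Sum>y\<in>hbasis n. k y * bmul_coeff q y r)"
proof
  fix r
  have "hmul n (hbas q) k r = (\<Sum>x\<in>hbasis n. if x = q then (\<Sum>y\<in>hbasis n. k y * bmul_coeff q y r) else 0)"
    unfolding hmul_def hbas_def by (rule sum.cong) (auto simp: mult.assoc)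
  also have "\<dots> = (\<Sum>y\<in>hbasis n. k y * bmul_coeff q y r)" using q by simp
  finally show "hmul n (hbas q) k r = (\<Sum>y\<in>hbasis n. k y * bmul_coeff q y r)" .
qed

lemma hmul_hbas2: assumes "q \<in> hbasis n" "p \<in> hbasis n" shows "hmul n (hbas q) (hbas p) = (\<lambda>r. bmul_coeff q p r)"
proof
  fix r
  have "hmul n (hbas q) (hbas p) r = (\<Sum>y\<in>hbasis n. if y = p then bmul_coeff q p r else 0)"
    unfolding hmul_hbas[OF assms(1)] by (rule sum.cong) (auto simp: hbas_def)
  also have "\<dots> = bmul_coeff q p r" using assms by simp
  finally show "hmul n (hbas q) (hbas p) r = bmul_coeff q p r" .
qed

context
  fixes scale :: "'k::field \<Rightarrow> 'a::ring_1 \<Rightarrow> 'a"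
  assumes kalg: "k_algebra scale"
begin

interpretation m: module scale using kalg by (simp add: k_algebra_def)

lemma sc_mult_left: "scale c (x * y) = scale c x * y" using kalg unfolding k_algebra_def by blast
lemma sc_mult_right: "scale c (x * y) = x * scale c y" using kalg unfolding k_algebra_def by blast

lemma hact_hbas: assumes "p \<in> hbasis n" shows "hact n scale act (hbas p) a = act p a"
proof -
  have "hact n scale act (hbas p) a = (\<Sum>x\<in>hbasis n. if x = p then act p a else 0)"
    unfolding hact_def by (rule sum.cong) (auto simp: hbas_def)
  also have "\<dots> = act p a" using assms by simp
  finally show ?thesis .
qed

lemma hact_bmul: assumes "(x, S) \<in> hbasis n" "(y, T) \<in> hbasis n" shows "
   hact n scale act (\<lambda>r. bmul_coeff (x, S) (y, T) r) a =
   (if S \<inter> T = {} then scale ((-1) ^ ((if y then card S else 0) + inv_count S T)) (act (x \<noteq> y, S \<union> T) a) else 0)" (is "_ = ?R")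
proof -
  have "hact n scale act (\<lambda>r. bmul_coeff (x, S) (y, T) r) a = (\<Sum>r\<in>hbasis n. if r = (x \<noteq> y, S \<union> T) then
     (if S \<inter> T = {} then scale ((-1) ^ ((if y then card S else 0) + inv_count S T)) (act (x \<noteq> y, S \<union> T) a) else 0) else 0)"
    unfolding hact_def bmul_coeff_def prod.case by (rule sum.cong) auto
  also have "\<dots> = ?R" using assms by simp
  finally show ?thesis .
qed

lemma if_conj_zero: "(if a \<and> b then v else 0) = (if a then (if b then v else 0) else 0)"
  by simp

lemma sum_if_const: "(\<Sum>r\<in>B. if P then f r else 0) = (if P then sum f B else 0)"
  by (cases P) auto

lemma scale_if: "scale (if c then a else b) v = (if c then scale a v else scale b v)"
  by simp

lemma delta_sum: assumes "(x, S) \<in> hbasis n"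
  shows "(\<Sum>q\<in>hbasis n. \<Sum>r\<in>hbasis n. scale (delta_coeff (x, S) q r) (F q r)) =
    (\<Sum>T\<in>Pow S. scale (dsg S T) (F (x \<noteq> odd (card T), S - T) (x, T)))"
proof -
  have eq: "scale (delta_coeff (x, S) q r) (F q r) = (\<Sum>T\<in>Pow S. if q = (x \<noteq> odd (card T), S - T) \<and> r = (x, T) then scale (dsg S T) (F (x \<noteq> odd (card T), S - T) (x, T)) else 0)" for q r
    unfolding delta_coeff_def dsg_def prod.case m.scale_sum_left
    by (intro sum.cong refl) (simp only: scale_if m.scale_zero_left split: if_split, blast)
  have "(\<Sum>q\<in>hbasis n. \<Sum>r\<in>hbasis n. scale (delta_coeff (x, S) q r) (F q r)) =
     (\<Sum>T\<in>Pow S. \<Sum>q\<in>hbasis n. \<Sum>r\<in>hbasis n. if q = (x \<noteq> odd (card T), S - T) \<and> r = (x, T) then scale (dsg S T) (F (x \<noteq> odd (card T), S - T) (x, T)) else 0)"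
    unfolding eq
    by (subst sum.swap, rule sum.cong[OF refl], rule sum.swap)
  also have "\<dots> = (\<Sum>T\<in>Pow S. scale (dsg S T) (F (x \<noteq> odd (card T), S - T) (x, T)))"
  proof (rule sum.cong[OF refl])
    fix T assume "T \<in> Pow S"
    then have m1: "(x \<noteq> odd (card T), S - T) \<in> hbasis n" and m2: "(x, T) \<in> hbasis n" using assms by auto
    show "(\<Sum>q\<in>hbasis n. \<Sum>r\<in>hbasis n. if q = (x \<noteq> odd (card T), S - T) \<and> r = (x, T) then scale (dsg S T) (F (x \<noteq> odd (card T), S - T) (x, T)) else 0) = scale (dsg S T) (F (x \<noteq> odd (card T), S - T) (x, T))"
      using m1 m2 by (simp only: if_conj_zero sum_if_const sum.delta finite_hbasis if_True) 
  qed
  finally show ?thesis .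
qed

end

lemma dsg_empty[simp]: "dsg S {} = 1"
  by (simp add: dsg_def)

lemma dsg_self[simp]: "dsg S S = 1"
  by (simp add: dsg_def)

lemma sum_Pow_single: "(\<Sum>T\<in>Pow {i}. f T) = f {} + f {i}"
proof -
  have "Pow {i} = {{}, {i}}" by auto
  then show ?thesis by simp
qed

lemma sum_Pow_pair: assumes "i \<noteq> j" shows "(\<Sum>T\<in>Pow {i, j}. f T) = f {} + f {i} + f {j} + f {i, j}"
proof -
  have "Pow {i, j} = {{}, {i}, {j}, {i, j}}" by auto
  moreover have "{i} \<noteq> {j}" "{i} \<noteq> {i, j}" "{j} \<noteq> {i, j}" using assms by auto
  ultimately show ?thesis by (simp add: add.assoc)
qed

lemma inv_count_empty1[simp]: "inv_count {} T = 0" by (simp add: inv_count_def)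
lemma inv_count_empty2[simp]: "inv_count S {} = 0" by (simp add: inv_count_def)

lemma dsg_pair: assumes "i \<noteq> j" shows "dsg {i, j} {i} + (dsg {i, j} {j} :: 'k::field) = 0"
proof -
  have e1: "{i, j} - {i} = {j}" "{i, j} - {j} = {i}" using assms by auto
  have s1: "{(l, m). l \<in> {j} \<and> m \<in> {i} \<and> l < m} = (if j < i then {(j, i)} else {})" by auto
  have s2: "{(l, m). l \<in> {i} \<and> m \<in> {j} \<and> l < m} = (if i < j then {(i, j)} else {})" by auto
  show ?thesis unfolding dsg_def e1 s1 s2 using assms by (cases "i < j") auto
qed

context
  fixes scale :: "'k::field \<Rightarrow> 'a::ring_1 \<Rightarrow> 'a" and act :: "hb \<Rightarrow> 'a \<Rightarrow> 'a" and n :: nat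
  assumes kalg: "k_algebra scale" and pa: "is_partial_action n scale act"
begin

interpretation m: module scale using kalg by (simp add: k_algebra_def)

lemma act_add: "p \<in> hbasis n \<Longrightarrow> act p (x + y) = act p x + act p y"
  using pa unfolding is_partial_action_def by blast

lemma act_scale: "p \<in> hbasis n \<Longrightarrow> act p (scale c x) = scale c (act p x)"
  using pa unfolding is_partial_action_def by blast

lemma act_zero: "p \<in> hbasis n \<Longrightarrow> act p 0 = 0"
  using act_add[of p 0 0] by simp

lemma act_sum: "p \<in> hbasis n \<Longrightarrow> act p (\<Sum>i\<in>I. f i) = (\<Sum>i\<in>I. act p (f i))"
  by (induct I rule: infinite_finite_induct) (simp_all add: act_zero act_add)

lemma act_unit: "act (False, {}) a = a"
proof -
  have "hact n scale act (hbas (False, {})) a = a" using pa unfolding is_partial_action_def by blast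
  then show ?thesis using hact_hbas[OF kalg, of "(False, {})" n act a] by simp
qed

lemma P1b: assumes "(x, S) \<in> hbasis n"
  shows "act (x, S) (a * b) = (\<Sum>T\<in>Pow S. scale (dsg S T) (act (x \<noteq> odd (card T), S - T) a * act (x, T) b))"
proof -
  have "hact n scale act (hbas (x, S)) (a * b) =
        (\<Sum>q\<in>hbasis n. \<Sum>r\<in>hbasis n. scale (hdelta n (hbas (x, S)) q r) (act q a * act r b))"
    using pa hbas_Hn[OF assms] unfolding is_partial_action_def by blast
  then show ?thesis
    unfolding hact_hbas[OF kalg assms] hdelta_hbas[OF assms] delta_sum[OF kalg assms] .
qed

lemma P2b: assumes "(x, S) \<in> hbasis n" "p' \<in> hbasis n"
  shows "act (x, S) (act p' a) = (\<Sum>T\<in>Pow S. scale (dsg S T) (act (x \<noteq> odd (card T), S - T) 1 * hact n scale act (\<lambda>r. bmul_coeff (x, T) p' r) a))"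
proof -
  have "hact n scale act (hbas (x, S)) (hact n scale act (hbas p') a) =
        (\<Sum>q\<in>hbasis n. \<Sum>r\<in>hbasis n. scale (hdelta n (hbas (x, S)) q r) (act q 1 * hact n scale act (hmul n (hbas r) (hbas p')) a))"
    using pa hbas_Hn[OF assms(1)] hbas_Hn[OF assms(2)] unfolding is_partial_action_def by blast
  also have "\<dots> = (\<Sum>q\<in>hbasis n. \<Sum>r\<in>hbasis n. scale (delta_coeff (x, S) q r) (act q 1 * hact n scale act (\<lambda>r'. bmul_coeff r p' r') a))"
    unfolding hdelta_hbas[OF assms(1)]
    by (intro sum.cong refl) (simp add: hmul_hbas2 assms)
  finally show ?thesis
    unfolding hact_hbas[OF kalg assms(2)] hact_hbas[OF kalg assms(1)] delta_sum[OF kalg assms(1)] .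
qed

lemma hact_hmul: assumes "q \<in> hbasis n"
  shows "hact n scale act (hmul n (hbas q) k) a = (\<Sum>y\<in>hbasis n. scale (k y) (hact n scale act (\<lambda>r. bmul_coeff q y r) a))"
  unfolding hmul_hbas[OF assms] hact_def m.scale_sum_left m.scale_sum_right m.scale_scale
  by (rule sum.swap)

lemma sum4_swap: "(\<Sum>p\<in>A. \<Sum>y\<in>B. \<Sum>q\<in>C. \<Sum>r\<in>D. f p y q r) = (\<Sum>q\<in>C. \<Sum>r\<in>D. \<Sum>p\<in>A. \<Sum>y\<in>B. f p y q r)"
proof -
  have "(\<Sum>p\<in>A. \<Sum>y\<in>B. \<Sum>q\<in>C. \<Sum>r\<in>D. f p y q r) = (\<Sum>p\<in>A. \<Sum>q\<in>C. \<Sum>r\<in>D. \<Sum>y\<in>B. f p y q r)"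
    by (rule sum.cong[OF refl], subst sum.swap, rule sum.cong[OF refl], rule sum.swap)
  also have "\<dots> = (\<Sum>q\<in>C. \<Sum>p\<in>A. \<Sum>r\<in>D. \<Sum>y\<in>B. f p y q r)" by (rule sum.swap)
  also have "\<dots> = (\<Sum>q\<in>C. \<Sum>r\<in>D. \<Sum>p\<in>A. \<Sum>y\<in>B. f p y q r)" by (rule sum.cong[OF refl], rule sum.swap)
  finally show ?thesis .
qed

lemma sym_reduce:
  assumes SB: "\<And>p p' a. p \<in> hbasis n \<Longrightarrow> p' \<in> hbasis n \<Longrightarrow> act p (act p' a) =
     (\<Sum>q\<in>hbasis n. \<Sum>r\<in>hbasis n. scale (delta_coeff p q r) (hact n scale act (\<lambda>r'. bmul_coeff q p' r') a * act r 1))"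
  shows "is_symmetric n scale act"
  unfolding is_symmetric_def
proof (intro ballI allI)
  fix h k :: "hb \<Rightarrow> 'k" and a
  have "hact n scale act h (hact n scale act k a) =
     (\<Sum>p\<in>hbasis n. \<Sum>y\<in>hbasis n. scale (h p) (scale (k y) (act p (act y a))))"
    unfolding hact_def by (intro sum.cong refl) (simp add: act_sum act_scale m.scale_sum_right)
  also have "\<dots> = (\<Sum>p\<in>hbasis n. \<Sum>y\<in>hbasis n. \<Sum>q\<in>hbasis n. \<Sum>r\<in>hbasis n. scale (h p * (k y * delta_coeff p q r)) (hact n scale act (\<lambda>r'. bmul_coeff q y r') a * act r 1))"
    by (intro sum.cong refl) (simp add: SB m.scale_sum_right)
  also have "\<dots> = (\<Sum>q\<in>hbasis n. \<Sum>r\<in>hbasis n. \<Sum>p\<in>hbasis n. \<Sum>y\<in>hbasis n. scale (h p * (k y * delta_coeff p q r)) (hact n scale act (\<lambda>r'. bmul_coeff q y r') a * act r 1))"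
    by (rule sum4_swap)
  also have "\<dots> = (\<Sum>q\<in>hbasis n. \<Sum>r\<in>hbasis n. scale (hdelta n h q r) (hact n scale act (hmul n (hbas q) k) a * act r 1))"
    unfolding hdelta_def
    by (intro sum.cong refl) (simp add: hact_hmul sum_distrib_right sum_distrib_left sc_mult_left[OF kalg, symmetric] m.scale_sum_left m.scale_sum_right, subst (2) sum.swap, simp add: mult_ac)
  finally show "hact n scale act h (hact n scale act k a) = (\<Sum>q\<in>hbasis n. \<Sum>r\<in>hbasis n. scale (hdelta n h q r) (hact n scale act (hmul n (hbas q) k) a * act r 1))" .
qed


lemma scale_cancel: assumes "(\<sigma>::'k) \<noteq> 0" "scale \<sigma> v = 0" shows "v = 0"
proof -
  have "v = scale (inverse \<sigma> * \<sigma>) v" using assms(1) by simp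
  also have "\<dots> = scale (inverse \<sigma>) (scale \<sigma> v)" by simp
  finally show ?thesis using assms(2) by simp
qed

lemma scale_sign_cancel: "scale ((-1::'k) ^ m) v = 0 \<Longrightarrow> v = 0"
  by (rule scale_cancel[of "(-1::'k) ^ m"]) simp_all

section \<open>Case g.1 = 1\<close>

lemma x_one_zero_c1: assumes g1: "act (True, {}) 1 = 1" and i: "i \<in> {1..<n}"
  shows "act (False, {i}) 1 = 0"
proof -
  have h: "(False, {i}) \<in> hbasis n" using i by simp
  have "act (False, {i}) (1 * 1) = act (False, {i}) 1 * act (False, {}) 1 + act (True, {}) 1 * act (False, {i}) 1"
    unfolding P1b[OF h] sum_Pow_single by (simp add: dsg_empty dsg_self)
  then show ?thesis using g1 by (simp add: act_unit)
qed

lemma eps_c1: assumes g1: "act (True, {}) 1 = 1"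
  shows "S \<subseteq> {1..<n} \<Longrightarrow> act (x, S) 1 = (if S = {} then 1 else 0)"
proof (induct S arbitrary: x rule: infinite_finite_induct)
  case (infinite S)
  then show ?case using finite_subset[of S "{1..<n}"] by auto
next
  case empty
  then show ?case using g1 act_unit by (cases x) auto
next
  case (insert i S')
  have i: "i \<in> {1..<n}" and S': "S' \<subseteq> {1..<n}" using insert by auto
  have h: "(False, {i}) \<in> hbasis n" using i by simp
  have h': "(x, S') \<in> hbasis n" using S' by simp
  have xi: "act (False, {i}) 1 = 0" by (rule x_one_zero_c1[OF g1 i])
  have "act (False, {i}) (act (x, S') 1) = 0"
    using insert(3)[OF S', of x] xi act_zero[OF h] by simp
  moreover have "act (False, {i}) (act (x, S') 1) = hact n scale act (\<lambda>r. bmul_coeff (False, {i}) (x, S') r) 1"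
    unfolding P2b[OF h h'] sum_Pow_single using xi g1 by (simp add: dsg_empty dsg_self)
  ultimately have "hact n scale act (\<lambda>r. bmul_coeff (False, {i}) (x, S') r) 1 = 0" by simp
  then have "scale ((-1) ^ ((if x then card {i} else 0) + inv_count {i} S')) (act (x, insert i S') 1) = 0"
    unfolding hact_bmul[OF kalg h h'] using insert(2) by simp
  then show ?case by (auto dest: scale_sign_cancel)
qed

lemma symB_c1: assumes g1: "act (True, {}) 1 = 1" and h: "(x, S) \<in> hbasis n" and h': "p' \<in> hbasis n"
  shows "act (x, S) (act p' a) = (\<Sum>q\<in>hbasis n. \<Sum>r\<in>hbasis n. scale (delta_coeff (x, S) q r) (hact n scale act (\<lambda>r'. bmul_coeff q p' r') a * act r 1))"
proof -
  have S: "S \<subseteq> {1..<n}" using h by simp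
  have fin: "finite S" using S finite_subset by blast
  have "act (x, S) (act p' a) = (\<Sum>T\<in>Pow S. if T = S then hact n scale act (\<lambda>r. bmul_coeff (x, S) p' r) a else 0)"
    unfolding P2b[OF h h'] 
  proof (intro sum.cong refl)
    fix T assume T: "T \<in> Pow S"
    then have "S - T \<subseteq> {1..<n}" using S by auto
    then show "scale (dsg S T) (act (x \<noteq> odd (card T), S - T) 1 * hact n scale act (\<lambda>r. bmul_coeff (x, T) p' r) a) =
      (if T = S then hact n scale act (\<lambda>r. bmul_coeff (x, S) p' r) a else 0)"
      using T by (auto simp: eps_c1[OF g1] dsg_self)
  qed
  also have "\<dots> = hact n scale act (\<lambda>r. bmul_coeff (x, S) p' r) a" using fin by simp
  also have "\<dots> = (\<Sum>T\<in>Pow S. if T = {} then hact n scale act (\<lambda>r. bmul_coeff (x, S) p' r) a else 0)" using fin by simp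
  also have "\<dots> = (\<Sum>T\<in>Pow S. scale (dsg S T) (hact n scale act (\<lambda>r'. bmul_coeff (x \<noteq> odd (card T), S - T) p' r') a * act (x, T) 1))"
  proof (intro sum.cong refl)
    fix T assume T: "T \<in> Pow S"
    then have "T \<subseteq> {1..<n}" using S by auto
    then show "(if T = {} then hact n scale act (\<lambda>r. bmul_coeff (x, S) p' r) a else 0) =
      scale (dsg S T) (hact n scale act (\<lambda>r'. bmul_coeff (x \<noteq> odd (card T), S - T) p' r') a * act (x, T) 1)"
      by (auto simp: eps_c1[OF g1] dsg_empty)
  qed
  finally show ?thesis unfolding delta_sum[OF kalg h] .
qed


section \<open>Case g.1 = 0\<close>

lemma g_zero_c2: assumes g0: "act (True, {}) 1 = 0"
  shows "act (True, {}) b = 0"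
proof -
  have h: "(True, {}) \<in> hbasis n" "(False, {}) \<in> hbasis n" by simp_all
  show ?thesis using P2b[OF h, of b] g0 by (simp add: act_unit)
qed

lemma x_act_c2: assumes g0: "act (True, {}) 1 = 0" and i: "i \<in> {1..<n}"
  shows "act (False, {i}) b = act (False, {i}) 1 * b"
proof -
  have h: "(False, {i}) \<in> hbasis n" using i by simp
  show ?thesis using P1b[OF h, of 1 b] g0 unfolding sum_Pow_single by (simp add: act_unit)
qed

lemma gx_act1_c2: assumes g0: "act (True, {}) 1 = 0" and i: "i \<in> {1..<n}"
  shows "act (True, {i}) b = b * act (True, {i}) 1"
proof -
  have h: "(True, {i}) \<in> hbasis n" using i by simp
  show ?thesis using P1b[OF h, of b 1] g0 unfolding sum_Pow_single by (simp add: act_unit)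
qed

lemma d_eq_c_c2: assumes g0: "act (True, {}) 1 = 0" and i: "i \<in> {1..<n}"
  shows "act (True, {i}) 1 = act (False, {i}) 1"
proof -
  have h: "(True, {i}) \<in> hbasis n" "(True, {}) \<in> hbasis n" "(False, {i}) \<in> hbasis n" using i by simp_all
  have "act (True, {i}) (act (True, {}) 1) = 0" using g_zero_c2[OF g0] act_zero[OF h(1)] by simp
  moreover have "act (True, {i}) (act (True, {}) 1) = act (True, {i}) 1 - act (False, {i}) 1"
    unfolding P2b[OF h(1) h(2)] sum_Pow_single
    using hact_bmul[OF kalg, of True "{}" n True "{}" act 1] hact_bmul[OF kalg, of True "{i}" n True "{}" act 1] i
    by (simp add: act_unit)
  ultimately show ?thesis by simp
qed

lemma xany_c2: assumes g0: "act (True, {}) 1 = 0"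
  and cen: "\<forall>i\<in>{1..<n}. \<forall>b. act (False, {i}) 1 * b = b * act (False, {i}) 1"
  and i: "i \<in> {1..<n}"
  shows "act (y, {i}) b = act (False, {i}) 1 * b"
proof (cases y)
  case True
  have "act (False, {i}) 1 * b = b * act (False, {i}) 1" by (rule cen[rule_format, OF i])
  then show ?thesis using gx_act1_c2[OF g0 i, of b] d_eq_c_c2[OF g0 i] True by (simp only: simp_thms)
next
  case False
  then show ?thesis using x_act_c2[OF g0 i, of b] by simp
qed

lemma big_zero_c2: assumes g0: "act (True, {}) 1 = 0"
  and cen: "\<forall>i\<in>{1..<n}. \<forall>b. act (False, {i}) 1 * b = b * act (False, {i}) 1"
  shows "S \<subseteq> {1..<n} \<Longrightarrow> 2 \<le> card S \<Longrightarrow> act (x, S) b = 0"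
proof (induct S arbitrary: x rule: infinite_finite_induct)
  case (infinite S)
  then show ?case by simp
next
  case empty
  then show ?case by simp
next
  case (insert i S')
  have i: "i \<in> {1..<n}" and S': "S' \<subseteq> {1..<n}" using insert by auto
  have cS': "1 \<le> card S'" using insert by simp
  have h: "(True, {i}) \<in> hbasis n" using i by simp
  have h': "(\<not> x, S') \<in> hbasis n" using S' by simp
  have flip: "act (\<not> x, S') b = act (x, S') b"
  proof (cases "card S' = 1")
    case True
    then obtain j where j: "S' = {j}" by (auto simp: card_Suc_eq)
    then have "j \<in> {1..<n}" using S' by simp
    then show ?thesis using xany_c2[OF g0 cen, of j "\<not> x" b] xany_c2[OF g0 cen, of j x b] j by simp
  next
    case False
    then show ?thesis using insert(3)[OF S'] cS' by simp
  qed
  have "act (True, {i}) (act (\<not> x, S') b) = act (False, {i}) 1 * act (x, S') b"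
    using xany_c2[OF g0 cen i, of True "act (\<not> x, S') b"] flip by simp
  moreover have "act (True, {i}) (act (\<not> x, S') b) = act (True, {i}) 1 * act (x, S') b + 
      scale ((-1) ^ ((if \<not> x then card {i} else 0) + inv_count {i} S')) (act (x, insert i S') b)"
    unfolding P2b[OF h h'] sum_Pow_single
    using hact_bmul[OF kalg, of True "{}" n "\<not> x" S' act b] hact_bmul[OF kalg, of True "{i}" n "\<not> x" S' act b] i S' insert(2)
    by (simp add: act_unit)
  ultimately have "scale ((-1) ^ ((if \<not> x then card {i} else 0) + inv_count {i} S')) (act (x, insert i S') b) = 0"
    using d_eq_c_c2[OF g0 i] by simp
  then show ?case by (rule scale_sign_cancel)
qed


lemma flip_c2: assumes g0: "act (True, {}) 1 = 0"
  and cen: "\<forall>i\<in>{1..<n}. \<forall>b. act (False, {i}) 1 * b = b * act (False, {i}) 1"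
  and S: "S \<subseteq> {1..<n}" "S \<noteq> {}"
  shows "act (\<not> x, S) b = act (x, S) b"
proof (cases "card S = 1")
  case True
  then obtain j where j: "S = {j}" by (auto simp: card_Suc_eq)
  then have "j \<in> {1..<n}" using S by simp
  then show ?thesis using xany_c2[OF g0 cen, of j "\<not> x" b] xany_c2[OF g0 cen, of j x b] j by simp
next
  case False
  have "finite S" using S finite_subset by blast
  then have "2 \<le> card S" using False S(2) by (cases "card S") auto
  then show ?thesis using big_zero_c2[OF g0 cen S(1)] by simp
qed

lemma B1_c2: assumes g0: "act (True, {}) 1 = 0"
  and cen: "\<forall>i\<in>{1..<n}. \<forall>b. act (False, {i}) 1 * b = b * act (False, {i}) 1"
  and j: "j \<in> {1..<n}" and S': "S' \<subseteq> {1..<n}"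
  shows "hact n scale act (\<lambda>r. bmul_coeff (z, {j}) (y, S') r) a =
    (if S' = {} then scale ((-1) ^ (if y then 1 else 0)) (act (False, {j}) 1 * a) else 0)"
proof -
  have h: "(z, {j}) \<in> hbasis n" "(y, S') \<in> hbasis n" using j S' by simp_all
  show ?thesis
  proof (cases "S' = {}")
    case True
    then show ?thesis unfolding hact_bmul[OF kalg h] using xany_c2[OF g0 cen j, of "z \<noteq> y" a] by simp
  next
    case False
    have fin: "finite S'" using S' finite_subset by blast
    have "j \<notin> S' \<Longrightarrow> 2 \<le> card (insert j S')" using False fin by (cases "card S'") auto
    then have "j \<notin> S' \<Longrightarrow> act (z \<noteq> y, insert j S') a = 0" using big_zero_c2[OF g0 cen, of "insert j S'"] j S' by simp
    then show ?thesis unfolding hact_bmul[OF kalg h] using False by auto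
  qed
qed

lemma B2_c2: assumes g0: "act (True, {}) 1 = 0"
  and cen: "\<forall>i\<in>{1..<n}. \<forall>b. act (False, {i}) 1 * b = b * act (False, {i}) 1"
  and S: "S \<subseteq> {1..<n}" "2 \<le> card S" and S': "S' \<subseteq> {1..<n}"
  shows "hact n scale act (\<lambda>r. bmul_coeff (z, S) (y, S') r) a = 0"
proof -
  have h: "(z, S) \<in> hbasis n" "(y, S') \<in> hbasis n" using S S' by simp_all
  have fin: "finite (S \<union> S')" using S S' finite_subset by (metis le_sup_iff finite_atLeastLessThan)
  have "card S \<le> card (S \<union> S')" using fin by (simp add: card_mono)
  then have "act (z \<noteq> y, S \<union> S') a = 0" using big_zero_c2[OF g0 cen, of "S \<union> S'"] S S' by simp
  then show ?thesis unfolding hact_bmul[OF kalg h] by simp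
qed


lemma symB_c2: assumes g0: "act (True, {}) 1 = 0"
  and cen: "\<forall>i\<in>{1..<n}. \<forall>b. act (False, {i}) 1 * b = b * act (False, {i}) 1"
  and h: "(x, S) \<in> hbasis n" and h': "(y, S') \<in> hbasis n"
  shows "act (x, S) (act (y, S') a) = (\<Sum>q\<in>hbasis n. \<Sum>r\<in>hbasis n. scale (delta_coeff (x, S) q r) (hact n scale act (\<lambda>r'. bmul_coeff q (y, S') r') a * act r 1))"
  unfolding delta_sum[OF kalg h]
proof -
  have S: "S \<subseteq> {1..<n}" and S': "S' \<subseteq> {1..<n}" using h h' by auto
  have fin: "finite S" using S finite_subset by blast
  have cen': "\<And>i b. i \<in> {1..<n} \<Longrightarrow> act (False, {i}) 1 * b = b * act (False, {i}) 1"
    using cen by blast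
  consider "S = {}" | "card S = 1" | "card S = 2" | "3 \<le> card S"
    using fin by (cases "card S") (auto, linarith)
  then show "act (x, S) (act (y, S') a) = (\<Sum>T\<in>Pow S. scale (dsg S T) (hact n scale act (\<lambda>r'. bmul_coeff (x \<noteq> odd (card T), S - T) (y, S') r') a * act (x, T) 1))"
  proof cases
    case 1
    then show ?thesis
      using hact_bmul[OF kalg, of x "{}" n y S' act a] S' g_zero_c2[OF g0] act_unit
      by (cases x) simp_all
  next
    case 2
    then obtain i where iS: "S = {i}" by (auto simp: card_Suc_eq)
    then have i: "i \<in> {1..<n}" using S by simp
    have ci: "act (x, {i}) 1 = act (False, {i}) 1" using xany_c2[OF g0 cen i, of x 1] by simp
    have lhs: "act (x, {i}) (act (y, S') a) = act (False, {i}) 1 * act (y, S') a"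
      using xany_c2[OF g0 cen i, of x "act (y, S') a"] .
    have t2: "hact n scale act (\<lambda>r'. bmul_coeff (\<not> x, {}) (y, S') r') a = act (x = y, S') a"
      using hact_bmul[OF kalg, of "\<not> x" "{}" n y S' act a] S' by auto
    show ?thesis
    proof (cases x)
      case True
      then show ?thesis unfolding iS sum_Pow_single lhs
        using g0 t2 ci cen'[OF i, of "act (y, S') a"] by simp
    next
      case False
      note B1 = B1_c2[OF g0 cen i S', of False y a]
      show ?thesis
      proof (cases "S' = {}")
        case True
        then show ?thesis unfolding iS sum_Pow_single lhs using False B1 t2 ci act_unit g_zero_c2[OF g0] cen'[OF i, of a]
          by (cases y) simp_all
      next
        case S'ne: False
        then show ?thesis unfolding iS sum_Pow_single lhs using False B1 t2 ci act_unit
            flip_c2[OF g0 cen S' S'ne, of y a] cen'[OF i, of "act (y, S') a"] by simp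
      qed
    qed
  next
    case 3
    then obtain i j where ij: "S = {i, j}" "i \<noteq> j" by (auto simp: card_Suc_eq numeral_2_eq_2)
    then have i: "i \<in> {1..<n}" and j: "j \<in> {1..<n}" using S by auto
    have lhs: "act (x, S) (act (y, S') a) = 0" using big_zero_c2[OF g0 cen S] 3 by simp
    have e1: "{i, j} - {i} = {j}" "{i, j} - {j} = {i}" using ij by auto
    have z1: "hact n scale act (\<lambda>r'. bmul_coeff (x, {i, j}) (y, S') r') a = 0"
      using B2_c2[OF g0 cen S _ S', of z y a for z] 3 ij by simp
    have z2: "act (x, {i, j}) 1 = 0" using big_zero_c2[OF g0 cen S] 3 ij by simp
    have ci: "act (x, {i}) 1 = act (False, {i}) 1" using xany_c2[OF g0 cen i, of x 1] by simp
    have cj: "act (x, {j}) 1 = act (False, {j}) 1" using xany_c2[OF g0 cen j, of x 1] by simp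
    define w where "w = act (False, {i}) 1 * (act (False, {j}) 1 * a)"
    have w1: "act (False, {j}) 1 * a * act (False, {i}) 1 = w"
    proof -
      have "act (False, {j}) 1 * a * act (False, {i}) 1 = act (False, {j}) 1 * (act (False, {i}) 1 * a)"
        using cen'[OF i, of a] by (simp add: mult.assoc)
      also have "\<dots> = (act (False, {j}) 1 * act (False, {i}) 1) * a" by (simp add: mult.assoc)
      also have "\<dots> = (act (False, {i}) 1 * act (False, {j}) 1) * a" using cen'[OF i, of "act (False, {j}) 1"] by simp
      finally show ?thesis unfolding w_def by (simp add: mult.assoc)
    qed
    have w2: "act (False, {i}) 1 * a * act (False, {j}) 1 = w"
      unfolding w_def using cen'[OF j, of a] by (simp add: mult.assoc)
    have sum: "(\<Sum>T\<in>Pow S. scale (dsg S T) (hact n scale act (\<lambda>r'. bmul_coeff (x \<noteq> odd (card T), S - T) (y, S') r') a * act (x, T) 1))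
      = scale (dsg S {i}) (hact n scale act (\<lambda>r'. bmul_coeff (\<not> x, {j}) (y, S') r') a * act (False, {i}) 1)
      + scale (dsg S {j}) (hact n scale act (\<lambda>r'. bmul_coeff (\<not> x, {i}) (y, S') r') a * act (False, {j}) 1)"
      unfolding ij(1) sum_Pow_pair[OF ij(2)] e1 using z1 z2 ci cj ij(2) by simp
    show ?thesis
    proof (cases "S' = {}")
      case True
      have "scale (dsg S {i}) (scale ((-1) ^ (if y then 1 else 0)) w) + scale (dsg S {j}) (scale ((-1) ^ (if y then 1 else 0)) w)
          = scale ((dsg S {i} + dsg S {j}) * (-1) ^ (if y then 1 else 0)) w"
        by (simp add: m.scale_left_distrib distrib_right)
      also have "\<dots> = 0" by (simp only: ij(1) dsg_pair[OF ij(2)] mult_zero_left m.scale_zero_left)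
      finally show ?thesis unfolding lhs sum B1_c2[OF g0 cen i S'] B1_c2[OF g0 cen j S'] using True
        by (simp add: sc_mult_left[OF kalg, symmetric] w1 w2)
    next
      case False
      then show ?thesis unfolding lhs sum B1_c2[OF g0 cen i S'] B1_c2[OF g0 cen j S'] by simp
    qed
  next
    case 4
    have lhs: "act (x, S) (act (y, S') a) = 0" using big_zero_c2[OF g0 cen S] 4 by simp
    have "(\<Sum>T\<in>Pow S. scale (dsg S T) (hact n scale act (\<lambda>r'. bmul_coeff (x \<noteq> odd (card T), S - T) (y, S') r') a * act (x, T) 1)) = 0"
    proof (intro sum.neutral ballI)
      fix T assume T: "T \<in> Pow S"
      then have TS: "T \<subseteq> {1..<n}" "S - T \<subseteq> {1..<n}" using S by auto
      have finT: "finite T" using T fin finite_subset by auto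
      consider "card T = 0" | "card T = 1" | "2 \<le> card T" by linarith
      then show "scale (dsg S T) (hact n scale act (\<lambda>r'. bmul_coeff (x \<noteq> odd (card T), S - T) (y, S') r') a * act (x, T) 1) = 0"
      proof cases
        case 1
        then have "T = {}" using finT by simp
        then show ?thesis using B2_c2[OF g0 cen S _ S', of x y a] 4 by simp
      next
        case 2
        have "card (S - T) = card S - card T" using T fin by (simp add: card_Diff_subset finite_subset)
        then have "2 \<le> card (S - T)" using 2 4 by simp
        then show ?thesis using B2_c2[OF g0 cen TS(2) _ S', of _ y a] by simp
      next
        case 3
        then show ?thesis using big_zero_c2[OF g0 cen TS(1)] by simp
      qed
    qed
    then show ?thesis using lhs by simp
  qed
qed

end

theorem theorem4p5:
  fixes scale :: "'k::field \<Rightarrow> 'a::ring_1 \<Rightarrow> 'a"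
    and act :: "hb \<Rightarrow> 'a \<Rightarrow> 'a"
    and n :: nat
  assumes "(2::'k) \<noteq> 0"
    and "n \<ge> 2"
    and "k_algebra scale"
    and "is_partial_action n scale act"
    and "act (True, {}) 1 = 1 \<or>
         (act (True, {}) 1 = 0 \<and>
          (\<forall>i\<in>{1..<n}. \<forall>b. act (False, {i}) 1 * b = b * act (False, {i}) 1))"
  shows "is_symmetric n scale act"
proof (rule sym_reduce[OF assms(3) assms(4)])
  fix p p' a assume hp: "p \<in> hbasis n" and hp': "p' \<in> hbasis n"
  obtain x S where p: "p = (x, S)" by (cases p)
  obtain y S' where p': "p' = (y, S')" by (cases p')
  show "act p (act p' a) = (\<Sum>q\<in>hbasis n. \<Sum>r\<in>hbasis n. scale (delta_coeff p q r) (hact n scale act (\<lambda>r'. bmul_coeff q p' r') a * act r 1))"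
    using assms(5)
  proof
    assume g1: "act (True, {}) 1 = 1"
    show ?thesis using symB_c1[OF assms(3) assms(4) g1, of x S p' a] hp hp' p by simp
  next
    assume "act (True, {}) 1 = 0 \<and> (\<forall>i\<in>{1..<n}. \<forall>b. act (False, {i}) 1 * b = b * act (False, {i}) 1)"
    then have g0: "act (True, {}) 1 = 0" and cen: "\<forall>i\<in>{1..<n}. \<forall>b. act (False, {i}) 1 * b = b * act (False, {i}) 1" by auto
    show ?thesis using symB_c2[OF assms(3) assms(4) g0 cen, of x S y S' a] hp hp' p p' by simp
  qed
qed

end
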